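(* Let triangle $ABC$ be inscribed in a circle $\Gamma$ with center $O$ and radius $R$, with $AB>BC$, and let $A,B,C$ also denote its angles at the respective vertices. Let $B'$ be the midpoint of the arc $CA$ of $\Gamma$ not containing $B$. Let the line through $B'$ perpendicular to $AB$ meet $\Gamma$ again at $E$, and let the line through $A$ perpendicular to $EA$ meet line $EB'$ at $F$. Then $FA=2R\sin\frac{C-A}{2}\tan\frac{B}{2}$. Moreover, for a point $D$ on the minor arc $CB'$, one has $AB+CD=BC+DA$ if and only if $DB'=2R\sin\frac{C-A}{2}\tan\frac{B}{2}$. Consequently the point $D$ on minor arc $CB'$ with $DB'=FA$ makes $ABCD$ a convex tangential (indeed bicentric) quadrilateral.
   Context: A convex quadrilateral $ABCD$ is tangential (has an incircle) iff $AB+CD=BC+DA$. *)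

theory Defs
  imports "HOL-Analysis.Analysis"
begin

definition cross2 :: "complex \<Rightarrow> complex \<Rightarrow> real" where
  "cross2 u v = Re u * Im v - Im u * Re v"

definition vangle :: "complex \<Rightarrow> complex \<Rightarrow> real" where
  "vangle u v = arccos ((u \<bullet> v) / (norm u * norm v))"

definition angle_at :: "complex \<Rightarrow> complex \<Rightarrow> complex \<Rightarrow> real" where
  "angle_at Q P S = vangle (Q - P) (S - P)"

definition opp_sides :: "complex \<Rightarrow> complex \<Rightarrow> complex \<Rightarrow> complex \<Rightarrow> bool" where
  "opp_sides P Q X Y \<longleftrightarrow> cross2 (Q - P) (X - P) * cross2 (Q - P) (Y - P) < 0"

definition convex_quad :: "complex \<Rightarrow> complex \<Rightarrow> complex \<Rightarrow> complex \<Rightarrow> bool" where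
  "convex_quad A B C D \<longleftrightarrow>
     (cross2 (B - A) (C - B) > 0 \<and> cross2 (C - B) (D - C) > 0 \<and>
      cross2 (D - C) (A - D) > 0 \<and> cross2 (A - D) (B - A) > 0) \<or>
     (cross2 (B - A) (C - B) < 0 \<and> cross2 (C - B) (D - C) < 0 \<and>
      cross2 (D - C) (A - D) < 0 \<and> cross2 (A - D) (B - A) < 0)"

definition tangential_quad :: "complex \<Rightarrow> complex \<Rightarrow> complex \<Rightarrow> complex \<Rightarrow> bool" where
  "tangential_quad A B C D \<longleftrightarrow>
     (\<exists>I r. r > 0 \<and> I \<in> interior (convex hull {A, B, C, D}) \<and>
        infdist I (closed_segment A B) = r \<and> infdist I (closed_segment B C) = r \<and>
        infdist I (closed_segment C D) = r \<and> infdist I (closed_segment D A) = r)"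

end

theory Submission
  imports Defs
begin

lemma lagrange: "(cross2 u v)^2 + (u \<bullet> v)^2 = (norm u)^2 * (norm v)^2"
  unfolding cross2_def inner_complex_def by (simp only: cmod_power2) (simp add: power2_eq_square algebra_simps)

lemma cross_le: "\<bar>cross2 u v\<bar> \<le> norm u * norm v"
proof -
  have "(cross2 u v)^2 \<le> (norm u * norm v)^2" using lagrange[of u v]
    using zero_le_power2[of "u \<bullet> v"] unfolding power_mult_distrib by linarith
  then have "\<bar>cross2 u v\<bar>^2 \<le> (norm u * norm v)^2" by simp
  then show ?thesis by (rule power2_le_imp_le) simp
qed

lemma cross_sub_same: "cross2 (Q - P) (I - ((1 - m) *\<^sub>R P + m *\<^sub>R Q)) = cross2 (Q - P) (I - P)"
  unfolding cross2_def by (simp add: algebra_simps)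

lemma norm_sub_scale: "(norm (a - l *\<^sub>R b))^2 = (norm a)^2 - 2 * l * (a \<bullet> b) + l^2 * (norm b)^2"
  for a b :: complex
  by (simp only: cmod_power2) (simp add: inner_complex_def power2_eq_square algebra_simps)

lemma infdist_seg:
  assumes PQ: "P \<noteq> Q" and r: "r \<ge> 0" and cr: "\<bar>cross2 (Q-P) (I-P)\<bar> = r * norm (Q-P)"
    and d1: "0 \<le> (I-P) \<bullet> (Q-P)" and d2: "(I-P) \<bullet> (Q-P) \<le> (norm (Q-P))^2"
  shows "infdist I (closed_segment P Q) = r"
proof -
  define n where "n = norm (Q - P)"
  have n: "n > 0" using PQ by (simp add: n_def)
  define l where "l = ((I-P) \<bullet> (Q-P)) / n^2"
  have l01: "0 \<le> l" "l \<le> 1" using d1 d2 n by (simp_all add: l_def n_def field_simps)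
  define T where "T = (1 - l) *\<^sub>R P + l *\<^sub>R Q"
  have Tin: "T \<in> closed_segment P Q" unfolding T_def closed_segment_def using l01 by blast
  have IT: "I - T = (I - P) - l *\<^sub>R (Q - P)" unfolding T_def by (simp add: algebra_simps)
  have "(norm (I - T))^2 = (norm (I-P))^2 - 2 * l * ((I-P) \<bullet> (Q-P)) + l^2 * n^2"
    unfolding IT n_def by (rule norm_sub_scale)
  also have "\<dots> = (norm (I-P))^2 - ((I-P) \<bullet> (Q-P))^2 / n^2"
    using n by (simp add: l_def field_simps power2_eq_square)
  also have "\<dots> = (cross2 (Q-P) (I-P))^2 / n^2"
    using lagrange[of "Q-P" "I-P"] n by (simp add: n_def field_simps inner_commute[of "Q-P" "I-P"])
  also have "\<dots> = r^2"
  proof -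
    have "(cross2 (Q-P) (I-P))^2 = (r * n)^2" using cr n_def by (metis power2_abs)
    then show ?thesis using n by (simp add: power_mult_distrib)
  qed
  finally have "norm (I - T) = r" using power2_eq_iff_nonneg[OF norm_ge_zero[of "I-T"] r] by blast
  then have "dist I T = r" by (simp add: dist_norm)
  then have le: "infdist I (closed_segment P Q) \<le> r" using Tin infdist_le by metis
  have ge: "r \<le> dist I X" if Xs: "X \<in> closed_segment P Q" for X
  proof -
    obtain m where X: "X = (1 - m) *\<^sub>R P + m *\<^sub>R Q" using Xs unfolding closed_segment_def by blast
    have "r * n = \<bar>cross2 (Q-P) (I - X)\<bar>" using cr X cross_sub_same by (simp add: n_def)
    also have "\<dots> \<le> n * norm (I - X)" using cross_le n_def by simp
    finally show ?thesis using n by (simp add: dist_norm mult.commute)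
  qed
  have ne: "closed_segment P Q \<noteq> {}" using ends_in_segment(1)[of P Q] by blast
  have "r \<le> infdist I (closed_segment P Q)"
    unfolding infdist_notempty[of "closed_segment P Q", OF ne] by (rule cINF_greatest) (auto intro: ge)
  with le show ?thesis by (rule antisym)
qed

lemma in_hull3:
  assumes "s * cross2 (C-B) (z-B) \<ge> 0" "s * cross2 (A-C) (z-C) \<ge> 0" "s * cross2 (B-A) (z-A) \<ge> 0"
    "s * cross2 (B-A) (C-A) > 0"
  shows "z \<in> convex hull {A,B,C}"
proof -
  define a where "a = cross2 (C-B) (z-B)"
  define b where "b = cross2 (A-C) (z-C)"
  define c where "c = cross2 (B-A) (z-A)"
  define S where "S = cross2 (B-A) (C-A)"
  have sum: "a + b + c = S" unfolding a_def b_def c_def S_def cross2_def by (simp add: algebra_simps)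
  have Sz: "of_real S * z = of_real a * A + of_real b * B + of_real c * C"
    unfolding a_def b_def c_def S_def cross2_def
    by (simp add: complex_eq_iff algebra_simps)
  have sS: "s * S > 0" using assms(4) by (simp add: S_def)
  have nz: "S \<noteq> 0" using sS by auto
  have w: "0 \<le> x / S" if "s * x \<ge> 0" for x
  proof -
    have s0: "s \<noteq> 0" using sS by auto
    have "x / S = (s * x) / (s * S)" using s0 by simp
    moreover have "0 \<le> (s * x) / (s * S)" using that sS by (intro divide_nonneg_pos) auto
    ultimately show ?thesis by simp
  qed
  have "z = (a/S) *\<^sub>R A + (b/S) *\<^sub>R B + (c/S) *\<^sub>R C"
  proof -
    have "z = (of_real S * z) / of_real S" using nz by simp
    also have "\<dots> = (a/S) *\<^sub>R A + (b/S) *\<^sub>R B + (c/S) *\<^sub>R C"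
      unfolding Sz using nz by (simp add: scaleR_conv_of_real field_simps)
    finally show ?thesis .
  qed
  moreover have "a/S + b/S + c/S = 1" using sum nz by (simp add: field_simps)
  moreover have "0 \<le> a/S" "0 \<le> b/S" "0 \<le> c/S" using w assms(1-3) a_def b_def c_def by auto
  ultimately show ?thesis unfolding convex_hull_3 by blast
qed

lemma open_cross: "open {z. 0 < s * cross2 (Q - P) (z - P)}"
proof -
  have "continuous_on UNIV (\<lambda>z. s * cross2 (Q - P) (z - P))"
    unfolding cross2_def by (intro continuous_intros)
  then show ?thesis using open_Collect_less[of "\<lambda>_. 0" "\<lambda>z. s * cross2 (Q - P) (z - P)"]
    by (simp add: continuous_on_const)
qed

lemma abs_s: "s = 1 \<or> s = -1 \<Longrightarrow> \<bar>x\<bar> = \<bar>s * x\<bar>" for s x :: real by auto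

lemma tang_crit:
  assumes s: "s = 1 \<or> s = -1"
    and cv: "s * cross2 (B-A) (C-B) > 0" "s * cross2 (D-C) (A-D) > 0"
    and r: "r > 0"
    and AB: "s * cross2 (B-A) (I-A) = r * norm (B-A)" "0 \<le> (I-A) \<bullet> (B-A)" "(I-A) \<bullet> (B-A) \<le> (norm (B-A))^2"
    and BC: "s * cross2 (C-B) (I-B) = r * norm (C-B)" "0 \<le> (I-B) \<bullet> (C-B)" "(I-B) \<bullet> (C-B) \<le> (norm (C-B))^2"
    and CD: "s * cross2 (D-C) (I-C) = r * norm (D-C)" "0 \<le> (I-C) \<bullet> (D-C)" "(I-C) \<bullet> (D-C) \<le> (norm (D-C))^2"
    and DA: "s * cross2 (A-D) (I-D) = r * norm (A-D)" "0 \<le> (I-D) \<bullet> (A-D)" "(I-D) \<bullet> (A-D) \<le> (norm (A-D))^2"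
  shows "tangential_quad A B C D"
proof -
  have ne: "A \<noteq> B" "B \<noteq> C" "C \<noteq> D" "D \<noteq> A" using cv by (auto simp: cross2_def)
  have i1: "infdist I (closed_segment A B) = r"
    using ne AB r abs_s[OF s, of "cross2 (B-A) (I-A)"] by (intro infdist_seg) auto
  have i2: "infdist I (closed_segment B C) = r"
    using ne BC r abs_s[OF s, of "cross2 (C-B) (I-B)"] by (intro infdist_seg) auto
  have i3: "infdist I (closed_segment C D) = r"
    using ne CD r abs_s[OF s, of "cross2 (D-C) (I-C)"] by (intro infdist_seg) auto
  have i4: "infdist I (closed_segment D A) = r"
    using ne DA r abs_s[OF s, of "cross2 (A-D) (I-D)"] by (intro infdist_seg) auto
  define U where "U = {z. 0 < s * cross2 (B - A) (z - A)} \<inter> {z. 0 < s * cross2 (C - B) (z - B)}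
     \<inter> {z. 0 < s * cross2 (D - C) (z - C)} \<inter> {z. 0 < s * cross2 (A - D) (z - D)}"
  have oU: "open U" unfolding U_def by (intro open_Int open_cross)
  have IU: "I \<in> U" unfolding U_def using AB(1) BC(1) CD(1) DA(1) r ne by auto
  have sub: "U \<subseteq> convex hull {A,B,C,D}"
  proof
    fix z assume "z \<in> U"
    then have z: "0 < s * cross2 (B - A) (z - A)" "0 < s * cross2 (C - B) (z - B)"
      "0 < s * cross2 (D - C) (z - C)" "0 < s * cross2 (A - D) (z - D)" unfolding U_def by auto
    show "z \<in> convex hull {A,B,C,D}"
    proof (cases "s * cross2 (C-A) (z-A) \<le> 0")
      case True
      have e1: "cross2 (A-C) (z-C) = - cross2 (C-A) (z-A)" unfolding cross2_def by (simp add: algebra_simps)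
      have e2: "cross2 (B-A) (C-A) = cross2 (B-A) (C-B)" unfolding cross2_def by (simp add: algebra_simps)
      have "z \<in> convex hull {A,B,C}"
        by (rule in_hull3[of s]) (use z True cv e1 e2 in auto)
      moreover have "convex hull {A,B,C} \<subseteq> convex hull {A,B,C,D}" by (rule hull_mono) auto
      ultimately show ?thesis by auto
    next
      case False
      have e2: "cross2 (C-A) (D-A) = cross2 (D-C) (A-D)" unfolding cross2_def by (simp add: algebra_simps)
      have "z \<in> convex hull {A,C,D}"
        by (rule in_hull3[of s]) (use z False cv e2 in auto)
      moreover have "convex hull {A,C,D} \<subseteq> convex hull {A,B,C,D}" by (rule hull_mono) auto
      ultimately show ?thesis by auto
    qed
  qed
  have "I \<in> interior (convex hull {A,B,C,D})" using interior_maximal[OF sub oU] IU by auto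
  then show ?thesis unfolding tangential_quad_def using i1 i2 i3 i4 r by blast
qed

definition P :: "real \<Rightarrow> complex" where "P t = Complex (sin (2*t)) (- cos (2*t))"

lemma cross_P: "cross2 (P t1 - P t0) (P t2 - P t0) = 4 * sin(t1-t0) * sin(t2-t0) * sin(t2-t1)"
proof -
  have a: "sin t0 ^2 + cos t0^2 = 1" "sin t1 ^2 + cos t1^2 = 1" "sin t2 ^2 + cos t2^2 = 1" by simp_all
  show ?thesis unfolding cross2_def P_def
    by (simp add: sin_diff cos_diff sin_double cos_double) (use a in algebra)
qed
lemma dot_P: "(P t1 - P t0) \<bullet> (P t2 - P t0) = 4 * sin(t1-t0) * sin(t2-t0) * cos(t2-t1)"
proof -
  have a: "sin t0 ^2 + cos t0^2 = 1" "sin t1 ^2 + cos t1^2 = 1" "sin t2 ^2 + cos t2^2 = 1" by simp_all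
  show ?thesis unfolding inner_complex_def P_def
    by (simp add: sin_diff cos_diff sin_double cos_double) (use a in algebra)
qed
lemma norm_P_diff: "norm (P t1 - P t0) = 2 * \<bar>sin (t1 - t0)\<bar>"
proof -
  have "norm (P t1 - P t0) = sqrt ((P t1 - P t0) \<bullet> (P t1 - P t0))" by (simp add: norm_eq_sqrt_inner)
  also have "\<dots> = sqrt ((2 * sin (t1 - t0))^2)" by (simp add: dot_P power2_eq_square)
  also have "\<dots> = 2 * \<bar>sin (t1 - t0)\<bar>" by (simp only: real_sqrt_abs abs_mult abs_numeral)
  finally show ?thesis .
qed
lemma dist_P: "dist (P t1) (P t0) = 2 * \<bar>sin (t1 - t0)\<bar>"
  by (simp add: dist_norm norm_P_diff)
lemma norm_P: "norm (P t) = 1"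
  unfolding P_def by (simp add: cmod_def)
lemma P0: "P 0 = Complex 0 (-1)" unfolding P_def by simp
lemma P_pi: "P (t + pi) = P t" unfolding P_def by (simp add: distrib_left)

definition Lm :: "bool \<Rightarrow> complex \<Rightarrow> real \<Rightarrow> complex \<Rightarrow> complex" where
  "Lm s w R z = (if s then of_real R * w * z else of_real R * w * cnj z)"

lemma Lm_diff: "Lm s w R (z1 - z2) = Lm s w R z1 - Lm s w R z2"
  unfolding Lm_def by (simp add: algebra_simps)
lemma Lm_add: "Lm s w R (z1 + z2) = Lm s w R z1 + Lm s w R z2"
  unfolding Lm_def by (simp add: algebra_simps)
lemma Lm_scale: "Lm s w R (c *\<^sub>R z) = c *\<^sub>R Lm s w R z"
  unfolding Lm_def by (simp add: scaleR_conv_of_real algebra_simps)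
lemma Lm_norm: "cmod w = 1 \<Longrightarrow> R \<ge> 0 \<Longrightarrow> norm (Lm s w R z) = R * norm z"
  unfolding Lm_def by (simp add: norm_mult)
lemma Lm_inner: assumes "cmod w = 1" shows "Lm s w R z \<bullet> Lm s w R v = R^2 * (z \<bullet> v)"
proof -
  obtain p q where w: "w = Complex p q" by (cases w)
  have pq: "p^2 + q^2 = 1" using assms w by (simp add: cmod_def)
  show ?thesis unfolding Lm_def inner_complex_def w
    by (cases s) (simp_all add: algebra_simps power2_eq_square, (use pq in algebra)+)
qed
lemma Lm_cross: assumes "cmod w = 1" shows "cross2 (Lm s w R z) (Lm s w R v) = (if s then 1 else -1) * R^2 * cross2 z v"
proof -
  obtain p q where w: "w = Complex p q" by (cases w)
  have pq: "p^2 + q^2 = 1" using assms w by (simp add: cmod_def)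
  show ?thesis unfolding Lm_def cross2_def w
    by (cases s) (simp_all add: algebra_simps power2_eq_square, (use pq in algebra)+)
qed
lemma Lm_surj: assumes "cmod w = 1" "R > 0" shows "\<exists>z. Lm s w R z = y"
proof (cases s)
  case True
  have "w \<noteq> 0" using assms by auto
  then show ?thesis using True assms by (intro exI[of _ "y / (of_real R * w)"]) (simp add: Lm_def)
next
  case False
  have "w \<noteq> 0" using assms by auto
  then show ?thesis using False assms by (intro exI[of _ "cnj (y / (of_real R * w))"]) (simp add: Lm_def)
qed
lemma Lm_vangle: assumes "cmod w = 1" "R > 0" shows "vangle (Lm s w R z) (Lm s w R v) = vangle z v"
  unfolding vangle_def using assms by (simp add: Lm_inner Lm_norm power2_eq_square)

definition Hf :: "real \<Rightarrow> real \<Rightarrow> real \<Rightarrow> real \<Rightarrow> real" where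
  "Hf x y t1 t2 = - x * sin (t1 + t2) + y * cos (t1 + t2) + cos (t1 - t2)"
definition Kf :: "real \<Rightarrow> real \<Rightarrow> real \<Rightarrow> real \<Rightarrow> real" where
  "Kf x y t1 t2 = x * cos (t1 + t2) + y * sin (t1 + t2) - sin (t1 - t2)"

lemma chord_cross: "cross2 (P t2 - P t1) (Complex x y - P t1) = 2 * sin (t2 - t1) * Hf x y t1 t2"
proof -
  have a: "sin t1 ^2 + cos t1^2 = 1" "sin t2 ^2 + cos t2^2 = 1" by simp_all
  show ?thesis unfolding cross2_def P_def Hf_def
    by (simp add: sin_diff cos_diff sin_add cos_add sin_double cos_double) (use a in algebra)
qed

lemma chord_dot: "(Complex x y - P t1) \<bullet> (P t2 - P t1) = 2 * sin (t2 - t1) * Kf x y t1 t2"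
proof -
  have a: "sin t1 ^2 + cos t1^2 = 1" "sin t2 ^2 + cos t2^2 = 1" by simp_all
  show ?thesis unfolding inner_complex_def P_def Kf_def
    by (simp add: sin_diff cos_diff sin_add cos_add sin_double cos_double) (use a in algebra)
qed

context
  fixes u w d :: real
  assumes pit: "sin d * cos u = cos w * sin u" and c: "cos (w - d) \<noteq> 0" and cu: "cos u \<noteq> 0"
begin

definition "X0 = 2 * cos w * sin d / cos (w - d)"
definition "Y0 = (2 * sin w * sin d - cos (w - d)) / cos (w - d)"
definition "r0 = 2 * sin u * cos w * sin (w - d) / cos (w - d)"
definition "ff = 2 * cos u * cos w * sin (w - d) / cos (w - d)"
definition "hh = 2 * sin u ^ 2 * cos w * sin (w - d) / (cos u * cos (w - d))"
definition "ee = 2 * sin (w + u) - ff"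
definition "gg = 2 * sin (w - u) - ff"

lemmas a3 = sin_cos_squared_add[of u] sin_cos_squared_add[of w] sin_cos_squared_add[of d]

lemma cX: "X0 * cos (w - d) = 2 * cos w * sin d" unfolding X0_def using c by simp
lemma cY: "Y0 * cos (w - d) = 2 * sin w * sin d - cos (w - d)" unfolding Y0_def using c by simp

lemma Hred: assumes "- (2 * cos w * sin d) * sin (t1 + t2) + (2 * sin w * sin d - cos (w - d)) * cos (t1 + t2)
     + cos (w - d) * cos (t1 - t2) = cos (w - d) * V"
  shows "Hf X0 Y0 t1 t2 = V"
proof -
  have "cos (w - d) * Hf X0 Y0 t1 t2 = - (X0 * cos (w - d)) * sin (t1 + t2) + (Y0 * cos (w - d)) * cos (t1 + t2)
     + cos (w - d) * cos (t1 - t2)" unfolding Hf_def by (simp add: algebra_simps)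
  also have "\<dots> = cos (w - d) * V" unfolding cX cY by (rule assms)
  finally show ?thesis using c by simp
qed

lemma Kred: assumes "(2 * cos w * sin d) * cos (t1 + t2) + (2 * sin w * sin d - cos (w - d)) * sin (t1 + t2)
     - cos (w - d) * sin (t1 - t2) = cos (w - d) * V"
  shows "Kf X0 Y0 t1 t2 = V"
proof -
  have "cos (w - d) * Kf X0 Y0 t1 t2 = (X0 * cos (w - d)) * cos (t1 + t2) + (Y0 * cos (w - d)) * sin (t1 + t2)
     - cos (w - d) * sin (t1 - t2)" unfolding Kf_def by (simp add: algebra_simps)
  also have "\<dots> = cos (w - d) * V" unfolding cX cY by (rule assms)
  finally show ?thesis using c by simp
qed

lemma cr0: "cos (w - d) * r0 = 2 * sin u * cos w * sin (w - d)" unfolding r0_def using c by simp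
lemma cff: "cos (w - d) * ff = 2 * cos u * cos w * sin (w - d)" unfolding ff_def using c by simp

lemma I1: "Hf X0 Y0 (-u) w = - r0"
  apply (rule Hred) unfolding mult_minus_right cr0
  apply (simp add: sin_diff cos_diff sin_add cos_add)
  by (simp add: algebra_simps)
lemma I2: "Hf X0 Y0 w u = r0"
  apply (rule Hred) unfolding cr0
  apply (simp add: sin_diff cos_diff sin_add cos_add)
  by (simp add: algebra_simps)
lemma I3: "Hf X0 Y0 u d = r0"
  apply (rule Hred) unfolding cr0
  apply (simp add: sin_diff cos_diff sin_add cos_add)
  using a3 pit by algebra
lemma I4: "Hf X0 Y0 d (-u) = r0"
  apply (rule Hred) unfolding cr0
  apply (simp add: sin_diff cos_diff sin_add cos_add)
  using a3 pit by algebra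

lemma cee: "cos (w - d) * ee = 2 * sin (w + u) * cos (w - d) - 2 * cos u * cos w * sin (w - d)"
  unfolding ee_def using cff by (simp add: algebra_simps)
lemma cgg: "cos (w - d) * gg = 2 * sin (w - u) * cos (w - d) - 2 * cos u * cos w * sin (w - d)"
  unfolding gg_def using cff by (simp add: algebra_simps)
lemma chh: "cos (w - d) * cos u * hh = 2 * sin u ^ 2 * cos w * sin (w - d)"
  unfolding hh_def using c cu by simp

lemma K1: "Kf X0 Y0 (-u) w = ee"
  apply (rule Kred) unfolding cee
  apply (simp add: sin_diff cos_diff sin_add cos_add)
  by (simp add: algebra_simps)
lemma K2: "Kf X0 Y0 w u = - ff"
  apply (rule Kred) unfolding mult_minus_right cff
  apply (simp add: sin_diff cos_diff sin_add cos_add)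
  by (simp add: algebra_simps)
lemma K3: "Kf X0 Y0 u d = - gg"
  apply (rule Kred) unfolding mult_minus_right cgg
  apply (simp add: sin_diff cos_diff sin_add cos_add)
  using a3 pit by algebra
lemma K4: "Kf X0 Y0 d (-u) = - hh"
proof (rule Kred)
  let ?L = "(2 * cos w * sin d) * cos (d + - u) + (2 * sin w * sin d - cos (w - d)) * sin (d + - u)
     - cos (w - d) * sin (d - - u)"
  have "cos u * ?L = cos u * (cos (w - d) * - hh)"
  proof -
    have "cos u * (cos (w - d) * - hh) = - (cos (w - d) * cos u * hh)" by (simp add: algebra_simps)
    also have "\<dots> = - (2 * sin u ^ 2 * cos w * sin (w - d))" unfolding chh ..
    finally show ?thesis
      apply (simp add: sin_diff cos_diff sin_add cos_add)
      using a3 pit by algebra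
  qed
  then show "?L = cos (w - d) * - hh" using mult_left_cancel[OF cu] by blast
qed

lemma S1: "gg + hh = 2 * sin (u - d)"
proof -
  have "cos (w - d) * cos u * (gg + hh) = cos u * (cos (w - d) * gg) + cos (w - d) * cos u * hh"
    by (simp add: algebra_simps)
  also have "\<dots> = cos u * (2 * sin (w - u) * cos (w - d) - 2 * cos u * cos w * sin (w - d)) + 2 * sin u ^ 2 * cos w * sin (w - d)"
    unfolding cgg chh ..
  also have "\<dots> = cos (w - d) * cos u * (2 * sin (u - d))"
    apply (simp add: sin_diff cos_diff sin_add cos_add)
    using a3 pit by algebra
  finally show ?thesis using c cu by simp
qed

lemma S2: "hh + ee = 2 * sin (u + d)"
proof -
  have "cos (w - d) * cos u * (hh + ee) = cos u * (cos (w - d) * ee) + cos (w - d) * cos u * hh"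
    by (simp add: algebra_simps)
  also have "\<dots> = cos u * (2 * sin (w + u) * cos (w - d) - 2 * cos u * cos w * sin (w - d)) + 2 * sin u ^ 2 * cos w * sin (w - d)"
    unfolding cee chh ..
  also have "\<dots> = cos (w - d) * cos u * (2 * sin (u + d))"
    apply (simp add: sin_diff cos_diff sin_add cos_add)
    using a3 pit by algebra
  finally show ?thesis using c cu by simp
qed

lemma P1: "ee * gg = r0 ^ 2"
proof -
  have "(cos (w - d) * ee) * (cos (w - d) * gg) = (cos (w - d) * r0) ^ 2"
    unfolding cee cgg cr0
    apply (simp add: sin_diff cos_diff sin_add cos_add power2_eq_square)
    using a3 pit by algebra
  then have "cos (w - d) ^ 2 * (ee * gg) = cos (w - d) ^ 2 * r0 ^ 2" by (simp add: algebra_simps power2_eq_square)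
  then show ?thesis using c by simp
qed

lemma P2: "ee + gg = 4 * cos u * sin d / cos (w - d)"
proof -
  have "cos (w - d) * (ee + gg) = cos (w - d) * ee + cos (w - d) * gg" by (simp add: algebra_simps)
  also have "\<dots> = 4 * cos u * sin d"
    unfolding cee cgg
    apply (simp add: sin_diff cos_diff sin_add cos_add)
    using a3 by algebra
  finally show ?thesis using c by (simp add: field_simps)
qed
end

definition side :: "real \<Rightarrow> complex \<Rightarrow> complex \<Rightarrow> complex \<Rightarrow> real \<Rightarrow> bool" where
  "side s p q i r \<longleftrightarrow> s * cross2 (q - p) (i - p) = r * norm (q - p) \<and> 0 \<le> (i - p) \<bullet> (q - p)
     \<and> (i - p) \<bullet> (q - p) \<le> (norm (q - p))^2"

definition tdata :: "real \<Rightarrow> complex \<Rightarrow> complex \<Rightarrow> complex \<Rightarrow> complex \<Rightarrow> complex \<Rightarrow> real \<Rightarrow> bool" where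
  "tdata s a b c d i r \<longleftrightarrow> s * cross2 (b - a) (c - b) > 0 \<and> s * cross2 (c - b) (d - c) > 0 \<and>
     s * cross2 (d - c) (a - d) > 0 \<and> s * cross2 (a - d) (b - a) > 0 \<and> r > 0 \<and>
     side s a b i r \<and> side s b c i r \<and> side s c d i r \<and> side s d a i r"

lemma tdata_concl: assumes "s = 1 \<or> s = -1" "tdata s a b c d i r"
  shows "convex_quad a b c d \<and> tangential_quad a b c d"
proof
  show "convex_quad a b c d" using assms unfolding tdata_def convex_quad_def by auto
  show "tangential_quad a b c d"
    using assms unfolding tdata_def side_def by (intro tang_crit[of s _ _ _ _ r i]) auto
qed

lemma cross_PP: "cross2 (P t1 - P t0) (P t2 - P t1) = 4 * sin(t1-t0) * sin(t2-t0) * sin(t2-t1)"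
proof -
  have "cross2 (P t1 - P t0) (P t2 - P t1) = cross2 (P t1 - P t0) (P t2 - P t0)"
    unfolding cross2_def by (simp add: algebra_simps)
  then show ?thesis using cross_P by simp
qed

lemma side_gen: assumes "cross2 (q - p) (i - p) = -(2 * S) * r" "norm (q - p) = 2 * S"
    "(i - p) \<bullet> (q - p) = 2 * S * t" "S > 0" "0 \<le> t" "t \<le> 2 * S"
  shows "side (-1) p q i r"
proof -
  have "2 * S * t \<le> 2 * S * (2 * S)" by (rule mult_left_mono) (use assms in auto)
  then show ?thesis unfolding side_def using assms by (simp add: power2_eq_square)
qed

lemma sin_swap: "sin (a - b) = - sin (b - a)" for a b :: real using sin_minus[of "b - a"] by simp
lemma sin_swap2: "sin (- a - b) = - sin (a + b)" for a b :: real using sin_minus[of "a + b"] by simp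

lemma frame_tdata:
  fixes u w d :: real
  assumes u: "0 < u" "u < w" "w < pi/2" and d: "0 < d" "d < u"
    and pit: "sin d * cos u = cos w * sin u"
  shows "tdata (-1) (P (-u)) (P w) (P u) (P d) (Complex (X0 w d) (Y0 w d)) (r0 u w d)"
proof -
  have cwd: "cos (w - d) > 0" using u d by (intro cos_gt_zero_pi) auto
  have cu: "cos u > 0" using u d by (intro cos_gt_zero_pi) auto
  have cw: "cos w > 0" using u d by (intro cos_gt_zero_pi) auto
  have su: "sin u > 0" using u by (intro sin_gt_zero) auto
  have sd: "sin d > 0" using u d by (intro sin_gt_zero) auto
  have swd: "sin (w - d) > 0" using u d by (intro sin_gt_zero) auto
  have s1: "sin (w + u) > 0" using u by (intro sin_gt_zero) auto
  have s2: "sin (w - u) > 0" using u by (intro sin_gt_zero) auto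
  have s3: "sin (u - d) > 0" using u d by (intro sin_gt_zero) auto
  have s4: "sin (u + d) > 0" using u d by (intro sin_gt_zero) auto
  have s5: "sin (2 * u) > 0" using u by (intro sin_gt_zero) auto
  have s6: "sin (w - d) > 0" using u d by (intro sin_gt_zero) auto
  have c0: "cos (w - d) \<noteq> 0" "cos u \<noteq> 0" using cwd cu by auto
  note I = I1[OF pit c0] I2[OF pit c0] I3[OF pit c0] I4[OF pit c0]
  note K = K1[OF pit c0] K2[OF pit c0] K3[OF pit c0] K4[OF pit c0]
  note S = S1[OF pit c0] S2[OF pit c0]
  have r0: "r0 u w d > 0" unfolding r0_def[OF pit c0] using su cw swd cwd by simp
  have ff: "ff u w d > 0" unfolding ff_def[OF pit c0] using cu cw swd cwd by simp
  have hh: "hh u w d > 0" unfolding hh_def[OF pit c0] using su cu cw swd cwd by simp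
  have eg: "ee u w d > 0 \<and> gg u w d > 0"
  proof -
    have p: "ee u w d * gg u w d > 0" using P1[OF pit c0] r0 by simp
    have "ee u w d + gg u w d > 0" using P2[OF pit c0] cu sd cwd by simp
    with p show ?thesis by (smt (verit) mult_nonneg_nonpos mult_nonpos_nonneg)
  qed
  have ee_def': "ee u w d = 2 * sin (w + u) - ff u w d" by (simp add: ee_def[OF pit c0])
  have gg_def': "gg u w d = 2 * sin (w - u) - ff u w d" by (simp add: gg_def[OF pit c0])
  define i where "i = Complex (X0 w d) (Y0 w d)"
  have sAB: "side (-1) (P (-u)) (P w) i (r0 u w d)"
  proof (rule side_gen[where S="sin (w + u)" and t="ee u w d"])
    show "cross2 (P w - P (- u)) (i - P (- u)) = - (2 * sin (w + u)) * r0 u w d"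
      unfolding i_def chord_cross I by simp
    show "norm (P w - P (- u)) = 2 * sin (w + u)" unfolding norm_P_diff using s1 by simp
    show "(i - P (- u)) \<bullet> (P w - P (- u)) = 2 * sin (w + u) * ee u w d"
      unfolding i_def chord_dot K by simp
  qed (use s1 eg ee_def' ff in auto)
  have sBC: "side (-1) (P w) (P u) i (r0 u w d)"
  proof (rule side_gen[where S="sin (w - u)" and t="ff u w d"])
    show "cross2 (P u - P w) (i - P w) = - (2 * sin (w - u)) * r0 u w d"
      unfolding i_def chord_cross I sin_swap[of u w] by simp
    show "norm (P u - P w) = 2 * sin (w - u)" unfolding norm_P_diff sin_swap[of u w] using s2 by simp
    show "(i - P w) \<bullet> (P u - P w) = 2 * sin (w - u) * ff u w d"
      unfolding i_def chord_dot K sin_swap[of u w] by simp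
  qed (use s2 eg gg_def' ff in auto)
  have sCD: "side (-1) (P u) (P d) i (r0 u w d)"
  proof (rule side_gen[where S="sin (u - d)" and t="gg u w d"])
    show "cross2 (P d - P u) (i - P u) = - (2 * sin (u - d)) * r0 u w d"
      unfolding i_def chord_cross I sin_swap[of d u] by simp
    show "norm (P d - P u) = 2 * sin (u - d)" unfolding norm_P_diff sin_swap[of d u] using s3 by simp
    show "(i - P u) \<bullet> (P d - P u) = 2 * sin (u - d) * gg u w d"
      unfolding i_def chord_dot K sin_swap[of d u] by simp
  qed (use s3 eg S hh in auto)
  have sDA: "side (-1) (P d) (P (-u)) i (r0 u w d)"
  proof (rule side_gen[where S="sin (u + d)" and t="hh u w d"])
    show "cross2 (P (-u) - P d) (i - P d) = - (2 * sin (u + d)) * r0 u w d"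
      unfolding i_def chord_cross I sin_swap2[of u d] by simp
    show "norm (P (-u) - P d) = 2 * sin (u + d)" unfolding norm_P_diff sin_swap2[of u d] using s4 by simp
    show "(i - P d) \<bullet> (P (-u) - P d) = 2 * sin (u + d) * hh u w d"
      unfolding i_def chord_dot K sin_swap2[of u d] by simp
  qed (use s4 eg S hh in auto)
  have v1: "-1 * cross2 (P w - P (-u)) (P u - P w) > 0"
    unfolding cross_PP sin_swap[of u w] using s1 s2 s5 by (simp add: mult_pos_pos)
  have v2: "-1 * cross2 (P u - P w) (P d - P u) > 0"
    unfolding cross_PP sin_swap[of u w] sin_swap[of d w] sin_swap[of d u] using s2 s3 s6 by (simp add: mult_pos_pos)
  have v3: "-1 * cross2 (P d - P u) (P (-u) - P d) > 0"
    unfolding cross_PP sin_swap[of d u] sin_swap2[of u d] using s3 s4 s5 by simp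
  have v4: "-1 * cross2 (P (-u) - P d) (P w - P (-u)) > 0"
    unfolding cross_PP sin_swap2[of u d] using s1 s4 s6 by simp
  show ?thesis unfolding tdata_def using v1 v2 v3 v4 r0 sAB sBC sCD sDA i_def by simp
qed

lemma angle_P: "angle_at (P t1) (P t0) (P t2) =
   arccos (4 * sin (t1 - t0) * sin (t2 - t0) * cos (t2 - t1) / (2 * \<bar>sin (t1 - t0)\<bar> * (2 * \<bar>sin (t2 - t0)\<bar>)))"
  unfolding angle_at_def vangle_def dot_P norm_P_diff ..

lemma frame_angles:
  fixes u w :: real
  assumes u: "0 < u" "u < w" "w < pi/2"
  shows "angle_at (P w) (P u) (P (-u)) = pi - u - w"
    "angle_at (P w) (P (-u)) (P u) = w - u"
    "angle_at (P (-u)) (P w) (P u) = 2 * u"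
proof -
  have s1: "sin (w + u) > 0" using u by (intro sin_gt_zero) auto
  have s2: "sin (w - u) > 0" using u by (intro sin_gt_zero) auto
  have s5: "sin (2 * u) > 0" using u by (intro sin_gt_zero) auto
  have uu: "u + u = 2 * u" by simp
  have "angle_at (P w) (P u) (P (-u)) = arccos (cos (pi - u - w))"
  proof -
    have "cos (pi - u - w) = - cos (u + w)" using cos_diff[of pi "u+w"] by (simp add: diff_diff_eq)
    then show ?thesis unfolding angle_P sin_swap2[of u u] uu using s2 s5
      by (simp add: add.commute cos_minus[of "u + w", simplified])
  qed
  also have "\<dots> = pi - u - w" using u by (intro arccos_cos) auto
  finally show "angle_at (P w) (P u) (P (-u)) = pi - u - w" .
  have "angle_at (P w) (P (-u)) (P u) = arccos (cos (w - u))"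
    unfolding angle_P using s1 s5 sin_swap[of u w] cos_minus[of "w - u"] by (simp add: uu)
  also have "\<dots> = w - u" using u by (intro arccos_cos) auto
  finally show "angle_at (P w) (P (-u)) (P u) = w - u" .
  have "angle_at (P (-u)) (P w) (P u) = arccos (cos (2 * u))"
    unfolding angle_P sin_swap2[of u w] sin_swap[of u w] add.commute[of u w] using s1 s2 by (simp add: uu)
  also have "\<dots> = 2 * u" using u by (intro arccos_cos) auto
  finally show "angle_at (P (-u)) (P w) (P u) = 2 * u" .
qed

lemma chord: "P t2 - P t1 = Complex (2 * sin (t2 - t1) * cos (t1 + t2)) (2 * sin (t2 - t1) * sin (t1 + t2))"
proof -
  have a: "sin t1 ^2 + cos t1^2 = 1" "sin t2 ^2 + cos t2^2 = 1" by simp_all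
  show ?thesis unfolding P_def
    by (simp add: complex_eq_iff sin_diff cos_diff sin_add cos_add sin_double cos_double) (use a in algebra)
qed

lemma frame_E:
  fixes u w :: real and e :: complex
  assumes u: "0 < u" "u < w" "w < pi/2"
    and e: "norm e = 1" "e \<noteq> P 0" "(e - P 0) \<bullet> (P w - P (-u)) = 0"
  shows "e = P (w - u - pi/2)"
proof -
  obtain x y where exy: "e = Complex x y" by (cases e)
  define v where "v = w - u"
  have s1: "sin (w + u) > 0" using u by (intro sin_gt_zero) auto
  have circ: "x^2 + y^2 = 1" using e(1) exy by (simp add: cmod_def)
  have "(e - P 0) \<bullet> (P w - P (-u)) = 2 * sin (w + u) * (x * cos v + (y + 1) * sin v)"
    unfolding chord exy P0 inner_complex_def v_def by (simp add: algebra_simps)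
  then have lin: "x * cos v + (y + 1) * sin v = 0" using e(3) s1 by simp
  define k where "k = - x * sin v + (y + 1) * cos v"
  have sc: "sin v ^2 + cos v ^2 = 1" by simp
  have xk: "x = - k * sin v" unfolding k_def using lin sc by algebra
  have yk: "y + 1 = k * cos v" unfolding k_def using lin sc by algebra
  have "k * (k - 2 * cos v) = 0"
  proof -
    have "k * (k - 2 * cos v) = x^2 + (y+1)^2 - 2 * (y + 1)" using xk yk sc by algebra
    moreover have "x^2 + (y+1)^2 - 2 * (y + 1) = 0" using circ by (simp add: power2_eq_square algebra_simps)
    ultimately show ?thesis by simp
  qed
  moreover have "k \<noteq> 0"
  proof
    assume "k = 0"
    then have "e = P 0" using xk yk exy P0 by simp
    then show False using e(2) by simp
  qed
  ultimately have k: "k = 2 * cos v" by simp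
  have "P (w - u - pi/2) = Complex (- sin (2 * v)) (cos (2 * v))"
  proof -
    have "2 * (w - u - pi/2) = 2 * v - pi" unfolding v_def by (simp add: algebra_simps)
    then show ?thesis unfolding P_def by (simp add: sin_diff cos_diff)
  qed
  also have "\<dots> = e" unfolding exy sin_double cos_double_cos using xk yk k
    by (simp add: algebra_simps power2_eq_square)
  finally show ?thesis ..
qed

lemma frame_F:
  fixes u w t :: real and f :: complex
  assumes u: "0 < u" "u < w" "w < pi/2"
    and f: "f = P (w - u - pi/2) + t *\<^sub>R (P 0 - P (w - u - pi/2))"
      "(f - P (-u)) \<bullet> (P (w - u - pi/2) - P (-u)) = 0"
  shows "norm (f - P (-u)) = 2 * cos w * tan u"
proof -
  define te where "te = w - u - pi/2"
  define D1 where "D1 = P te - P (-u)"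
  define D2 where "D2 = P 0 - P te"
  have cu: "cos u > 0" using u by (intro cos_gt_zero_pi) auto
  have cw: "cos w > 0" using u by (intro cos_gt_zero_pi) auto
  have cv: "cos (w - u) > 0" using u by (intro cos_gt_zero_pi) auto
  have su: "sin u > 0" using u by (intro sin_gt_zero) auto
  have fa: "f - P (-u) = D1 + t *\<^sub>R D2" unfolding f(1) D1_def D2_def te_def by simp
  have d11: "D1 \<bullet> D1 = 4 * cos w ^ 2"
  proof -
    have "D1 \<bullet> D1 = 4 * sin (te - - u) * sin (te - - u) * cos 0" unfolding D1_def dot_P by simp
    also have "sin (te - - u) = - cos w" unfolding te_def using sin_diff[of w "pi/2"] by (simp add: algebra_simps)
    finally show ?thesis by (simp add: power2_eq_square)
  qed
  have d22: "D2 \<bullet> D2 = 4 * cos (w - u) ^ 2"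
  proof -
    have "D2 \<bullet> D2 = 4 * sin (0 - te) * sin (0 - te) * cos 0" unfolding D2_def dot_P by simp
    also have "sin (0 - te) = cos (w - u)" unfolding te_def using sin_diff[of "pi/2" "w - u"] by (simp add: algebra_simps)
    finally show ?thesis by (simp add: power2_eq_square)
  qed
  have d12: "D1 \<bullet> D2 = - 4 * cos (w - u) * cos w * cos u"
  proof -
    have "D1 \<bullet> D2 = - ((P 0 - P te) \<bullet> (P (-u) - P te))" unfolding D1_def D2_def
      by (simp add: inner_diff_left inner_diff_right inner_commute algebra_simps)
    also have "(P 0 - P te) \<bullet> (P (-u) - P te) = 4 * sin (0 - te) * sin (- u - te) * cos (- u - 0)" by (rule dot_P)
    also have "sin (0 - te) = cos (w - u)" unfolding te_def using sin_diff[of "pi/2" "w - u"] by (simp add: algebra_simps)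
    also have "sin (- u - te) = cos w" unfolding te_def using sin_diff[of "pi/2" w] by (simp add: algebra_simps)
    finally show ?thesis by simp
  qed
  have "(D1 + t *\<^sub>R D2) \<bullet> D1 = 0" using f(2) fa D1_def te_def by simp
  then have "D1 \<bullet> D1 + t * (D1 \<bullet> D2) = 0" by (simp add: inner_add_left inner_commute[of D2 D1])
  then have teq: "t * (cos (w - u) * cos u) = cos w"
    unfolding d11 d12 using cw by (simp add: power2_eq_square algebra_simps)
  have "(norm (f - P (-u)))^2 = D1 \<bullet> D1 + 2 * t * (D1 \<bullet> D2) + t^2 * (D2 \<bullet> D2)"
    unfolding fa power2_norm_eq_inner by (simp add: inner_add_left inner_add_right inner_commute power2_eq_square algebra_simps)
  also have "\<dots> = 4 * cos w ^ 2 - 8 * cos w * (t * (cos (w - u) * cos u)) + 4 * (t * (cos (w - u) * cos u))^2 / cos u ^ 2"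
    unfolding d11 d22 d12 using cu by (simp add: power2_eq_square field_simps)
  also have "\<dots> = 4 * cos w^2 * (1 - cos u^2) / cos u^2"
    unfolding teq using cu by (simp add: field_simps power2_eq_square)
  also have "\<dots> = (2 * cos w * tan u)^2"
    unfolding tan_def by (simp add: power_divide power_mult_distrib sin_squared_eq)
  finally have "(norm (f - P (-u)))^2 = (2 * cos w * tan u)^2" .
  moreover have "2 * cos w * tan u \<ge> 0" using cw cu su by (simp add: tan_def)
  ultimately show ?thesis using power2_eq_iff_nonneg[OF norm_ge_zero] by blast
qed

lemma unit_P: assumes "norm z = 1" shows "\<exists>t. - (pi/2) < t \<and> t \<le> pi/2 \<and> z = P t"
proof -
  define th where "th = Arg z"
  have b: "- pi < th" "th \<le> pi" using Arg_bounded th_def by auto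
  have z: "z = Complex (cos th) (sin th)"
    using rcis_cmod_Arg[of z] assms unfolding th_def by (simp add: rcis_def cis.code)
  define t0 where "t0 = th / 2 + pi / 4"
  have Pt0: "P t0 = z"
  proof -
    have "2 * t0 = th + pi/2" unfolding t0_def by simp
    then show ?thesis unfolding P_def z by (simp add: sin_add cos_add)
  qed
  show ?thesis
  proof (cases "t0 \<le> pi/2")
    case True
    then show ?thesis using b Pt0 by (intro exI[of _ t0]) (auto simp: t0_def)
  next
    case False
    have "P (t0 - pi) = P t0" using P_pi[of "t0 - pi"] by simp
    then show ?thesis using b Pt0 False by (intro exI[of _ "t0 - pi"]) (auto simp: t0_def)
  qed
qed

lemma frame_D:
  fixes u :: real
  assumes u: "0 < u" "u < pi/2" and z: "norm z = 1" "opp_sides (P u) (P 0) z (P (-u))"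
  shows "\<exists>d. 0 < d \<and> d < u \<and> z = P d"
proof -
  obtain t where t: "- (pi/2) < t" "t \<le> pi/2" "z = P t" using unit_P[OF z(1)] by blast
  have su: "sin u > 0" using u by (intro sin_gt_zero) auto
  have s2u: "sin (2*u) > 0" using u by (intro sin_gt_zero) auto
  have c2: "cross2 (P 0 - P u) (P (-u) - P u) < 0"
    unfolding cross_P using su s2u by (simp add: sin_swap2[of u u] mult_pos_pos)
  have "cross2 (P 0 - P u) (z - P u) * cross2 (P 0 - P u) (P (-u) - P u) < 0"
    using z(2) unfolding opp_sides_def .
  then have c1: "cross2 (P 0 - P u) (z - P u) > 0" using c2 by (simp add: mult_less_0_iff)
  then have "sin (t - u) * sin t < 0" unfolding t(3) cross_P using su
    by (simp add: mult_less_0_iff zero_less_mult_iff)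
  then have pr: "sin (t - u) * sin t < 0" .
  have "0 < t"
  proof (rule ccontr)
    assume "\<not> 0 < t"
    then have "sin t \<le> 0" using t sin_ge_zero[of "-t"] by simp
    moreover have "sin (t - u) < 0"
    proof -
      have "0 < sin (u - t)" by (rule sin_gt_zero) (use t u \<open>\<not> 0 < t\<close> in linarith)+
      then show ?thesis using sin_swap[of t u] by simp
    qed
    ultimately show False using pr by (simp add: mult_le_0_iff mult_less_0_iff)
  qed
  moreover have "t < u"
  proof (rule ccontr)
    assume "\<not> t < u"
    then have "sin t > 0" using t u by (intro sin_gt_zero) auto
    moreover have "sin (t - u) \<ge> 0" using t u \<open>\<not> t < u\<close> by (intro sin_ge_zero) auto
    ultimately show False using pr by (simp add: mult_less_0_iff)
  qed
  ultimately show ?thesis using t by blast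
qed

lemma frame_D_inv:
  fixes u d :: real
  assumes "0 < d" "d < u" "u < pi/2"
  shows "opp_sides (P u) (P 0) (P d) (P (-u))"
proof -
  have su: "sin u > 0" using assms by (intro sin_gt_zero) auto
  have s2u: "sin (2*u) > 0" using assms by (intro sin_gt_zero) auto
  have sd: "sin d > 0" using assms by (intro sin_gt_zero) auto
  have sdu: "sin (u - d) > 0" using assms by (intro sin_gt_zero) auto
  have c2: "cross2 (P 0 - P u) (P (-u) - P u) < 0"
    unfolding cross_P using su s2u by (simp add: sin_swap2[of u u] mult_pos_pos)
  have c1: "cross2 (P 0 - P u) (P d - P u) > 0"
    unfolding cross_P sin_swap[of d u] using su sd sdu by simp
  show ?thesis unfolding opp_sides_def using c1 c2 by (simp add: mult_pos_neg)
qed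

lemma frame_pitot:
  fixes u w d :: real
  assumes u: "0 < u" "u < w" "w < pi/2" and d: "0 < d" "d < u"
  shows "dist (P (-u)) (P w) + dist (P u) (P d) = dist (P w) (P u) + dist (P d) (P (-u))
     \<longleftrightarrow> dist (P d) (P 0) = 2 * cos w * tan u"
proof -
  have cu: "cos u > 0" using u by (intro cos_gt_zero_pi) auto
  have s1: "sin (w + u) > 0" using u by (intro sin_gt_zero) auto
  have s2: "sin (w - u) > 0" using u by (intro sin_gt_zero) auto
  have s3: "sin (u - d) > 0" using u d by (intro sin_gt_zero) auto
  have s4: "sin (u + d) > 0" using u d by (intro sin_gt_zero) auto
  have sd: "sin d > 0" using u d by (intro sin_gt_zero) auto
  have "dist (P (-u)) (P w) + dist (P u) (P d) = dist (P w) (P u) + dist (P d) (P (-u))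
     \<longleftrightarrow> 2 * sin (w + u) + 2 * sin (u - d) = 2 * sin (w - u) + 2 * sin (u + d)"
    unfolding dist_P sin_swap2[of u w] add.commute[of u w] sin_swap2[of u d] add.commute[of u d]
    using s1 s2 s3 s4 by (simp add: add.commute[of d u])
  also have "\<dots> \<longleftrightarrow> cos w * sin u = sin d * cos u"
    by (simp add: sin_add sin_diff algebra_simps)
  also have "\<dots> \<longleftrightarrow> 2 * sin d = 2 * cos w * tan u"
    unfolding tan_def using cu by (auto simp: field_simps)
  also have "\<dots> \<longleftrightarrow> dist (P d) (P 0) = 2 * cos w * tan u"
    unfolding dist_P using sd by simp
  finally show ?thesis .
qed

lemma frame_exists:
  fixes u w :: real
  assumes u: "0 < u" "u < w" "w < pi/2"
  shows "\<exists>d. 0 < d \<and> d < u \<and> sin d = cos w * tan u"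
proof -
  have cu: "cos u > 0" using u by (intro cos_gt_zero_pi) auto
  have cw: "cos w > 0" using u by (intro cos_gt_zero_pi) auto
  have su: "sin u > 0" using u by (intro sin_gt_zero) auto
  have cwu: "cos w < cos u" using u by (intro cos_monotone_0_pi) auto
  define x where "x = cos w * tan u"
  have x0: "0 < x" unfolding x_def tan_def using cu cw su by simp
  have xs: "x < sin u" unfolding x_def tan_def using cu cw su cwu by (simp add: field_simps)
  have s1: "sin u \<le> 1" by simp
  have x1: "x \<le> 1" using xs s1 by linarith
  define d where "d = arcsin x"
  have "sin d = x" unfolding d_def using x0 x1 by (intro sin_arcsin) auto
  moreover have "0 < d" unfolding d_def using arcsin_less_arcsin[of 0 x] x0 x1 by simp
  moreover have "d < u" unfolding d_def using arcsin_less_arcsin[of x "sin u"] x0 xs s1 arcsin_sin[of u] u by simp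
  ultimately show ?thesis unfolding x_def by blast
qed

definition Tm :: "bool \<Rightarrow> complex \<Rightarrow> real \<Rightarrow> complex \<Rightarrow> complex \<Rightarrow> complex" where
  "Tm s w R Oc z = Oc + Lm s w R z"

definition sg :: "bool \<Rightarrow> real" where "sg s = (if s then 1 else -1)"

context
  fixes s :: bool and w :: complex and R :: real and Oc :: complex
  assumes w: "cmod w = 1" and R: "R > 0"
begin

lemma Tm_diff: "Tm s w R Oc x - Tm s w R Oc y = Lm s w R (x - y)"
  unfolding Tm_def Lm_diff by simp

lemma Tm_dist: "dist (Tm s w R Oc x) (Tm s w R Oc y) = R * dist x y"
  unfolding dist_norm Tm_diff using Lm_norm[OF w] R by simp

lemma Tm_0: "Tm s w R Oc 0 = Oc" unfolding Tm_def Lm_def by simp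

lemma Tm_inner: "(Tm s w R Oc x - Tm s w R Oc y) \<bullet> (Tm s w R Oc z - Tm s w R Oc v) = R^2 * ((x - y) \<bullet> (z - v))"
  unfolding Tm_diff by (rule Lm_inner[OF w])

lemma Tm_cross: "cross2 (Tm s w R Oc x - Tm s w R Oc y) (Tm s w R Oc z - Tm s w R Oc v) = sg s * R^2 * cross2 (x - y) (z - v)"
  unfolding Tm_diff Lm_cross[OF w] sg_def by simp

lemma Tm_angle: "angle_at (Tm s w R Oc x) (Tm s w R Oc y) (Tm s w R Oc z) = angle_at x y z"
  unfolding angle_at_def Tm_diff using Lm_vangle[OF w R] by simp

lemma sg_sq: "sg s * sg s = 1" unfolding sg_def by simp

lemma Tm_opp: "opp_sides (Tm s w R Oc p) (Tm s w R Oc q) (Tm s w R Oc x) (Tm s w R Oc y) \<longleftrightarrow> opp_sides p q x y"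
proof -
  have "cross2 (Tm s w R Oc q - Tm s w R Oc p) (Tm s w R Oc x - Tm s w R Oc p) * cross2 (Tm s w R Oc q - Tm s w R Oc p) (Tm s w R Oc y - Tm s w R Oc p)
     = (sg s * sg s) * R^4 * (cross2 (q - p) (x - p) * cross2 (q - p) (y - p))"
    unfolding Tm_cross by (simp add: algebra_simps power4_eq_xxxx power2_eq_square)
  then show ?thesis unfolding opp_sides_def sg_sq using R by (simp add: mult_less_0_iff)
qed

lemma Tm_surj: "\<exists>z. Z = Tm s w R Oc z"
proof -
  obtain z where "Lm s w R z = Z - Oc" using Lm_surj[OF w R] by blast
  then show ?thesis unfolding Tm_def by (intro exI[of _ z]) simp
qed

lemma Tm_inj: "Tm s w R Oc x = Tm s w R Oc y \<Longrightarrow> x = y"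
proof -
  assume "Tm s w R Oc x = Tm s w R Oc y"
  then have "dist (Tm s w R Oc x) (Tm s w R Oc y) = 0" by simp
  then show "x = y" unfolding Tm_dist using R by simp
qed

lemma Tm_lin: "Tm s w R Oc (a + t *\<^sub>R (b - a)) = Tm s w R Oc a + t *\<^sub>R (Tm s w R Oc b - Tm s w R Oc a)"
  unfolding Tm_def Lm_add Lm_scale Lm_diff by simp

lemma Tm_side: "side s0 p q i r \<Longrightarrow> side (sg s * s0) (Tm s w R Oc p) (Tm s w R Oc q) (Tm s w R Oc i) (R * r)"
proof -
  assume h: "side s0 p q i r"
  have n: "norm (Tm s w R Oc q - Tm s w R Oc p) = R * norm (q - p)"
    using Tm_dist[of q p] by (simp add: dist_norm)
  have c: "sg s * s0 * cross2 (Tm s w R Oc q - Tm s w R Oc p) (Tm s w R Oc i - Tm s w R Oc p) = R^2 * (s0 * cross2 (q - p) (i - p))"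
    unfolding Tm_cross using sg_sq by (simp add: algebra_simps)
  let ?X = "(i - p) \<bullet> (q - p)" and ?N = "(norm (q - p))^2"
  have h1: "s0 * cross2 (q - p) (i - p) = r * norm (q - p)" "0 \<le> ?X" "?X \<le> ?N" using h unfolding side_def by auto
  have "R^2 * ?X \<le> R^2 * ?N" using h1 by (intro mult_left_mono) auto
  moreover have "0 \<le> R^2 * ?X" using h1 by simp
  ultimately show ?thesis unfolding side_def c Tm_inner n using h1
    by (simp add: power_mult_distrib algebra_simps power2_eq_square)
qed

lemma Tm_tdata: "tdata s0 a b c d i r \<Longrightarrow>
   tdata (sg s * s0) (Tm s w R Oc a) (Tm s w R Oc b) (Tm s w R Oc c) (Tm s w R Oc d) (Tm s w R Oc i) (R * r)"
proof -
  assume h: "tdata s0 a b c d i r"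
  have cr: "sg s * s0 * cross2 (Tm s w R Oc y - Tm s w R Oc x) (Tm s w R Oc z - Tm s w R Oc y) = R^2 * (s0 * cross2 (y - x) (z - y))" for x y z
    unfolding Tm_cross using sg_sq by (simp add: algebra_simps)
  show ?thesis using h unfolding tdata_def cr using R Tm_side by auto
qed
end

lemma norm_step2:
  assumes g: "norm g = 1" "Re g > 0"
  shows "\<exists>u. 0 < u \<and> u < pi/2 \<and> g = P u \<and> Complex (- Re g) (Im g) = P (-u)"
proof -
  define x where "x = Re g"
  define y where "y = Im g"
  have xy: "x^2 + y^2 = 1" using g(1) unfolding x_def y_def cmod_def by simp
  have x0: "x > 0" using g(2) x_def by simp
  have y1: "-1 < y" "y < 1"
  proof -
    have "y^2 < 1" using xy x0 by (smt (verit) zero_less_power2)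
    then have "\<bar>y\<bar> < 1" by (simp add: abs_square_less_1)
    then show "-1 < y" "y < 1" by auto
  qed
  define u where "u = arccos (- y) / 2"
  have b: "0 < arccos (- y) \<and> arccos (- y) < pi" using y1 by (intro arccos_lt_bounded) auto
  have u2: "2 * u = arccos (- y)" unfolding u_def by simp
  have s: "sin (2 * u) = x"
  proof -
    have "sin (2 * u) = sqrt (1 - y^2)" unfolding u2 using y1 sin_arccos[of "-y"] by simp
    also have "1 - y^2 = x^2" using xy by simp
    finally show ?thesis using x0 by simp
  qed
  have c: "cos (2 * u) = - y" unfolding u2 using y1 by simp
  have "g = P u" unfolding P_def s c using x_def y_def by (simp add: complex_eq_iff)
  moreover have "Complex (- Re g) (Im g) = P (-u)" unfolding P_def using s c x_def y_def by simp
  moreover have "0 < u" "u < pi/2" using b u2 by auto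
  ultimately show ?thesis by blast
qed

lemma sin_prod: "sin (t - u) * sin (t + u) = sin t ^ 2 - sin u ^ 2" for t u :: real
proof -
  have a: "sin t ^2 + cos t^2 = 1" "sin u ^2 + cos u^2 = 1" by simp_all
  show ?thesis by (simp add: sin_diff sin_add) (use a in algebra)
qed

lemma norm_step3:
  fixes u :: real
  assumes u: "0 < u" "u < pi/2" and b: "norm b = 1" "opp_sides (P u) (P (-u)) (P 0) b"
    and ab: "dist (P (-u)) b > dist b (P u)"
  shows "\<exists>w. u < w \<and> w < pi/2 \<and> b = P w"
proof -
  obtain t where t: "- (pi/2) < t" "t \<le> pi/2" "b = P t" using unit_P[OF b(1)] by blast
  have su: "sin u > 0" using u by (intro sin_gt_zero) auto
  have s2u: "sin (2*u) > 0" using u by (intro sin_gt_zero) auto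
  have "cross2 (P (-u) - P u) (P 0 - P u) * cross2 (P (-u) - P u) (P t - P u) < 0"
    using b(2) t(3) unfolding opp_sides_def by simp
  then have "(16 * sin (2*u) ^ 2 * (sin u * sin u)) * (sin (t - u) * sin (t + u)) > 0"
    unfolding cross_P sin_swap2[of u u] sin_swap[of 0 u] by (simp add: algebra_simps power2_eq_square)
  moreover have "16 * sin (2*u) ^ 2 * (sin u * sin u) > 0" using su s2u by simp
  ultimately have "sin (t - u) * sin (t + u) > 0" by (rule zero_less_mult_pos)
  then have sq: "sin t ^ 2 > sin u ^ 2" unfolding sin_prod by simp
  have wcase: "\<exists>w. u < w \<and> w < pi - u \<and> b = P w"
  proof (cases "0 \<le> t")
    case True
    have "sin t \<ge> 0" using True t by (intro sin_ge_zero) auto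
    then have "sin u < sin t" using sq su by (smt (verit) power_mono)
    then have "u < t" using sin_mono_less_eq[of u t] u t by auto
    then show ?thesis using t u by (intro exI[of _ t]) auto
  next
    case False
    have "sin (-t) \<ge> 0" using False t by (intro sin_ge_zero) auto
    moreover have "sin t ^ 2 = sin (-t) ^ 2" by simp
    ultimately have "sin u < sin (-t)" using sq su by (smt (verit) power_mono)
    then have "u < -t" using sin_mono_less_eq[of u "-t"] u t False by auto
    moreover have "P (t + pi) = P t" by (rule P_pi)
    ultimately show ?thesis using t u False by (intro exI[of _ "t + pi"]) auto
  qed
  then obtain w where w: "u < w" "w < pi - u" "b = P w" by blast
  have s1: "sin (u + w) > 0" using w u by (intro sin_gt_zero) auto
  have s2: "sin (w - u) > 0" using w u by (intro sin_gt_zero) auto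
  have "sin (u + w) > sin (w - u)" using ab unfolding w(3) dist_P sin_swap2[of u w] using s1 s2 by simp
  then have "cos w * sin u > 0" by (simp add: sin_add sin_diff algebra_simps)
  then have cw: "cos w > 0" using su by (simp add: zero_less_mult_iff)
  have "w < pi/2"
  proof (rule ccontr)
    assume "\<not> w < pi/2"
    then have "sin (w - pi/2) \<ge> 0" using w u by (intro sin_ge_zero) auto
    moreover have "cos w = - sin (w - pi/2)" by (simp add: sin_diff)
    ultimately show False using cw by simp
  qed
  then show ?thesis using w by blast
qed

lemma Tm_flip: "Tm True w R Oc z = Tm False (-w) R Oc (- cnj z)"
  unfolding Tm_def Lm_def by simp

lemma norm_step1:
  fixes A B C Oc B' :: complex and R :: real
  assumes distinct: "A \<noteq> B" "B \<noteq> C" "C \<noteq> A"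
    and on: "dist Oc A = R" "dist Oc B = R" "dist Oc C = R"
    and b': "dist Oc B' = R" "dist B' C = dist B' A"
  shows "R > 0 \<and> (\<exists>s w a b g. cmod w = 1 \<and> A = Tm s w R Oc a \<and> B = Tm s w R Oc b \<and> C = Tm s w R Oc g
      \<and> B' = Tm s w R Oc (P 0) \<and> Re g > 0 \<and> a = Complex (- Re g) (Im g) \<and> norm b = 1 \<and> norm g = 1)"
proof -
  have R0: "R \<ge> 0" using on(1) by auto
  have R: "R > 0"
  proof (rule ccontr)
    assume "\<not> R > 0"
    then have "R = 0" using R0 by simp
    then show False using on distinct by simp
  qed
  define b0 where "b0 = (B' - Oc) / of_real R"
  have nb0: "cmod b0 = 1" unfolding b0_def using b'(1) R by (simp add: dist_norm norm_divide norm_minus_commute)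
  define w1 where "w1 = \<i> * b0"
  have w1: "cmod w1 = 1" unfolding w1_def using nb0 by (simp add: norm_mult)
  have w10: "w1 \<noteq> 0" using w1 by auto
  define a1 where "a1 = (A - Oc) / (of_real R * w1)"
  define bb1 where "bb1 = (B - Oc) / (of_real R * w1)"
  define g1 where "g1 = (C - Oc) / (of_real R * w1)"
  have TA: "A = Tm True w1 R Oc a1" unfolding a1_def Tm_def Lm_def using R w10 by simp
  have TB: "B = Tm True w1 R Oc bb1" unfolding bb1_def Tm_def Lm_def using R w10 by simp
  have TC: "C = Tm True w1 R Oc g1" unfolding g1_def Tm_def Lm_def using R w10 by simp
  have TB': "B' = Tm True w1 R Oc (P 0)" unfolding P0 Tm_def Lm_def w1_def b0_def using R
    by (simp add: complex_eq_iff)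
  have nrm: "norm z = 1" if "dist Oc (Tm True w1 R Oc z) = R" for z
  proof -
    have "dist (Tm True w1 R Oc 0) (Tm True w1 R Oc z) = R * dist 0 z" by (rule Tm_dist[OF w1 R])
    then have "R * dist 0 z = R" using that Tm_0[OF w1 R, of True Oc] by simp
    then show ?thesis using R by simp
  qed
  have na: "norm a1 = 1" using nrm on(1) TA by simp
  have nb: "norm bb1 = 1" using nrm on(2) TB by simp
  have ng: "norm g1 = 1" using nrm on(3) TC by simp
  have d1: "dist B' C = R * dist (P 0) g1" unfolding TB' TC by (rule Tm_dist[OF w1 R])
  have d2: "dist B' A = R * dist (P 0) a1" unfolding TB' TA by (rule Tm_dist[OF w1 R])
  have "R * dist (P 0) g1 = R * dist (P 0) a1" using b'(2) d1 d2 by simp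
  then have "dist (P 0) g1 = dist (P 0) a1" using R by simp
  then have "(dist (P 0) g1)^2 = (dist (P 0) a1)^2" by simp
  then have e1: "(Re g1)^2 + (Im g1 + 1)^2 = (Re a1)^2 + (Im a1 + 1)^2"
    unfolding dist_norm P0 cmod_power2 by (simp add: power2_eq_square algebra_simps)
  have ua: "(Re a1)^2 + (Im a1)^2 = 1" using na unfolding cmod_def by simp
  have ug: "(Re g1)^2 + (Im g1)^2 = 1" using ng unfolding cmod_def by simp
  have im: "Im a1 = Im g1" using e1 ua ug by (simp add: power2_eq_square algebra_simps)
  then have "(Re a1)^2 = (Re g1)^2" using ua ug by simp
  then have "(Re a1 - Re g1) * (Re a1 + Re g1) = 0" by (simp add: power2_eq_square algebra_simps)
  moreover have "Re a1 \<noteq> Re g1"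
  proof
    assume "Re a1 = Re g1"
    then have "a1 = g1" using im by (simp add: complex_eq_iff)
    then show False using TA TC distinct by simp
  qed
  ultimately have re: "Re a1 = - Re g1" by simp
  have rg0: "Re g1 \<noteq> 0" using re \<open>Re a1 \<noteq> Re g1\<close> by auto
  show ?thesis
  proof (cases "Re g1 > 0")
    case True
    have "a1 = Complex (- Re g1) (Im g1)" using re im by (simp add: complex_eq_iff)
    then show ?thesis using R w1 TA TB TC TB' True nb ng by blast
  next
    case False
    then have gneg: "Re g1 < 0" using rg0 by simp
    have w2: "cmod (- w1) = 1" using w1 by simp
    have p0: "- cnj (P 0) = P 0" unfolding P0 by (simp add: complex_eq_iff)
    have "- cnj a1 = Complex (- Re (- cnj g1)) (Im (- cnj g1))" using re im by (simp add: complex_eq_iff)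
    moreover have "Re (- cnj g1) > 0" using gneg by simp
    moreover have "norm (- cnj bb1) = 1" "norm (- cnj g1) = 1" using nb ng by simp_all
    moreover have "A = Tm False (- w1) R Oc (- cnj a1)" "B = Tm False (- w1) R Oc (- cnj bb1)"
      "C = Tm False (- w1) R Oc (- cnj g1)" "B' = Tm False (- w1) R Oc (P 0)"
      by (simp_all add: TA TB TC TB' Tm_flip p0)
    ultimately show ?thesis using R w2 by blast
  qed
qed

lemma normalize:
  fixes A B C Oc B' :: complex and R :: real
  assumes distinct: "A \<noteq> B" "B \<noteq> C" "C \<noteq> A"
    and on: "dist Oc A = R" "dist Oc B = R" "dist Oc C = R"
    and AB_gt_BC: "dist A B > dist B C"
    and b': "dist Oc B' = R" "dist B' C = dist B' A" "opp_sides C A B' B"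
  shows "R > 0 \<and> (\<exists>s w u v. cmod w = 1 \<and> 0 < u \<and> u < v \<and> v < pi/2 \<and> A = Tm s w R Oc (P (-u))
    \<and> B = Tm s w R Oc (P v) \<and> C = Tm s w R Oc (P u) \<and> B' = Tm s w R Oc (P 0))"
proof -
  obtain s w a b g where R: "R > 0" and h: "cmod w = 1" "A = Tm s w R Oc a" "B = Tm s w R Oc b" "C = Tm s w R Oc g"
      "B' = Tm s w R Oc (P 0)" "Re g > 0" "a = Complex (- Re g) (Im g)" "norm b = 1" "norm g = 1"
    using norm_step1[OF distinct on b'(1,2)] by blast
  obtain u where u: "0 < u" "u < pi/2" "g = P u" "Complex (- Re g) (Im g) = P (-u)" using norm_step2[OF h(9) h(6)] by blast
  have ua: "a = P (-u)" using u(4) h(7) by simp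
  have "opp_sides C A B' B = opp_sides (P u) (P (-u)) (P 0) b"
    unfolding h(2) h(3) h(4) h(5) ua u(3) by (rule Tm_opp[OF h(1) R])
  then have opp: "opp_sides (P u) (P (-u)) (P 0) b" using b'(3) by simp
  have "dist A B = R * dist (P (-u)) b" unfolding h(2) h(3) ua by (rule Tm_dist[OF h(1) R])
  moreover have "dist B C = R * dist b (P u)" unfolding h(3) h(4) u(3) by (rule Tm_dist[OF h(1) R])
  ultimately have "R * dist (P (-u)) b > R * dist b (P u)" using AB_gt_BC by simp
  then have ab: "dist (P (-u)) b > dist b (P u)" using R by simp
  obtain v where v: "u < v" "v < pi/2" "b = P v" using norm_step3[OF u(1,2) h(8) opp ab] by blast
  have eqs: "A = Tm s w R Oc (P (-u))" "B = Tm s w R Oc (P v)" "C = Tm s w R Oc (P u)" "B' = Tm s w R Oc (P 0)"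
    using h(2-5) ua u(3) v(3) by simp_all
  have "cmod w = 1 \<and> 0 < u \<and> u < v \<and> v < pi/2 \<and> A = Tm s w R Oc (P (-u))
    \<and> B = Tm s w R Oc (P v) \<and> C = Tm s w R Oc (P u) \<and> B' = Tm s w R Oc (P 0)"
    using h(1) u(1) v(1) v(2) eqs by simp
  then show ?thesis using R by blast
qed

theorem mainTheorem8:
  fixes A B C Oc B' E F :: complex and R :: real
  assumes distinct: "A \<noteq> B" "B \<noteq> C" "C \<noteq> A"
    and onGamma: "dist Oc A = R" "dist Oc B = R" "dist Oc C = R"
    and AB_gt_BC: "dist A B > dist B C"
    and B'_def: "dist Oc B' = R" "dist B' C = dist B' A" "opp_sides C A B' B"
    and E_def: "dist Oc E = R" "E \<noteq> B'" "(E - B') \<bullet> (B - A) = 0"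
    and F_def: "(F - A) \<bullet> (E - A) = 0" "\<exists>t::real. F = E + t *\<^sub>R (B' - E)"
  shows "dist F A = 2 * R * sin ((angle_at B C A - angle_at B A C) / 2) * tan (angle_at A B C / 2)
     \<and> (\<forall>D. dist Oc D = R \<and> opp_sides C B' D A \<longrightarrow>
          (dist A B + dist C D = dist B C + dist D A \<longleftrightarrow>
           dist D B' = 2 * R * sin ((angle_at B C A - angle_at B A C) / 2) * tan (angle_at A B C / 2)))
     \<and> (\<exists>D. dist Oc D = R \<and> opp_sides C B' D A \<and> dist D B' = dist F A)
     \<and> (\<forall>D. dist Oc D = R \<and> opp_sides C B' D A \<and> dist D B' = dist F A \<longrightarrow>
          convex_quad A B C D \<and> tangential_quad A B C D)"
proof -
  obtain s w u v where R: "R > 0" and h: "cmod w = 1" "0 < u" "u < v" "v < pi/2"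
    and hA: "A = Tm s w R Oc (P (-u))" and hB: "B = Tm s w R Oc (P v)" and hC: "C = Tm s w R Oc (P u)"
    and hB': "B' = Tm s w R Oc (P 0)"
    using normalize[OF distinct onGamma AB_gt_BC B'_def] by blast
  define T where "T = Tm s w R Oc"
  have Td: "dist (T x) (T y) = R * dist x y" for x y unfolding T_def by (rule Tm_dist[OF h(1) R])
  have Ti: "(T x - T y) \<bullet> (T z - T q) = R^2 * ((x - y) \<bullet> (z - q))" for x y z q
    unfolding T_def by (rule Tm_inner[OF h(1) R])
  have Ta: "angle_at (T x) (T y) (T z) = angle_at x y z" for x y z unfolding T_def by (rule Tm_angle[OF h(1) R])
  have To: "opp_sides (T p) (T q) (T x) (T y) \<longleftrightarrow> opp_sides p q x y" for p q x y
    unfolding T_def by (rule Tm_opp[OF h(1) R])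
  have Ts: "\<exists>z. Z = T z" for Z unfolding T_def by (rule Tm_surj[OF h(1) R])
  have Tinj: "T x = T y \<Longrightarrow> x = y" for x y unfolding T_def by (rule Tm_inj[OF h(1) R])
  have Tl: "T (a + t *\<^sub>R (b - a)) = T a + t *\<^sub>R (T b - T a)" for a b t unfolding T_def by (rule Tm_lin[OF h(1) R])
  have T0: "T 0 = Oc" unfolding T_def by (rule Tm_0[OF h(1) R])
  have Ttd: "tdata s0 a b c d i r \<Longrightarrow> tdata (sg s * s0) (T a) (T b) (T c) (T d) (T i) (R * r)" for s0 a b c d i r
    unfolding T_def by (rule Tm_tdata[OF h(1) R])
  have nT: "dist Oc (T z) = R \<longleftrightarrow> norm z = 1" for z
    using Td[of 0 z] T0 R by (simp add: dist_norm)
  note hs = hA[folded T_def] hB[folded T_def] hC[folded T_def] hB'[folded T_def]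
  define V where "V = 2 * R * cos v * tan u"
  have cu: "cos u > 0" using h by (intro cos_gt_zero_pi) auto
  have cv: "cos v > 0" using h by (intro cos_gt_zero_pi) auto
  have su: "sin u > 0" using h by (intro sin_gt_zero) auto
  note ang = frame_angles[OF h(2-4)]
  have val: "2 * R * sin ((angle_at B C A - angle_at B A C) / 2) * tan (angle_at A B C / 2) = V"
  proof -
    have a1: "(angle_at B C A - angle_at B A C) / 2 = pi/2 - v" unfolding hs Ta ang by simp
    have a2: "angle_at A B C / 2 = u" unfolding hs Ta ang by simp
    show ?thesis unfolding a1 a2 V_def cos_sin_eq[of v] by simp
  qed
  obtain e where hE: "E = T e" using Ts by blast
  have ne: "norm e = 1" using E_def(1) hE nT by simp
  have eB: "e \<noteq> P 0" using E_def(2) hE hs(4) by auto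
  have "R^2 * ((e - P 0) \<bullet> (P v - P (-u))) = 0" using E_def(3) unfolding hE hs Ti .
  then have "(e - P 0) \<bullet> (P v - P (-u)) = 0" using R by simp
  then have eq_e: "e = P (v - u - pi/2)" using frame_E[OF h(2-4) ne eB] by simp
  obtain t where ht: "F = E + t *\<^sub>R (B' - E)" using F_def(2) by blast
  obtain f where hF: "F = T f" using Ts by blast
  have "T f = T (e + t *\<^sub>R (P 0 - e))" using ht hF hE hs(4) Tl by simp
  then have eq_f: "f = P (v - u - pi/2) + t *\<^sub>R (P 0 - P (v - u - pi/2))" using Tinj eq_e by blast
  have "R^2 * ((f - P (-u)) \<bullet> (e - P (-u))) = 0" using F_def(1) unfolding hF hE hs Ti .
  then have "(f - P (-u)) \<bullet> (P (v - u - pi/2) - P (-u)) = 0" using R eq_e by simp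
  then have nf: "norm (f - P (-u)) = 2 * cos v * tan u" using frame_F[OF h(2-4) eq_f] by simp
  have "dist F A = R * dist f (P (-u))" unfolding hF hs by (rule Td)
  then have FA: "dist F A = V" unfolding V_def dist_norm nf by simp
  have Dpar: "\<exists>d. 0 < d \<and> d < u \<and> D = T (P d)" if "dist Oc D = R" "opp_sides C B' D A" for D
  proof -
    obtain z where hz: "D = T z" using Ts by blast
    have "norm z = 1" using that(1) hz nT by simp
    moreover have "opp_sides (P u) (P 0) z (P (-u))" using that(2) unfolding hz hs To .
    ultimately obtain d where "0 < d" "d < u" "z = P d" using frame_D[of u z] h by auto
    then show ?thesis using hz by blast
  qed
  have c2: "\<forall>D. dist Oc D = R \<and> opp_sides C B' D A \<longrightarrow>
          (dist A B + dist C D = dist B C + dist D A \<longleftrightarrow> dist D B' = V)"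
  proof (intro allI impI)
    fix D assume hD: "dist Oc D = R \<and> opp_sides C B' D A"
    then obtain d where d: "0 < d" "d < u" "D = T (P d)" using Dpar by blast
    have "dist A B + dist C D = dist B C + dist D A \<longleftrightarrow>
       R * (dist (P (-u)) (P v) + dist (P u) (P d)) = R * (dist (P v) (P u) + dist (P d) (P (-u)))"
      unfolding hs d(3) Td by (simp add: algebra_simps)
    also have "\<dots> \<longleftrightarrow> dist (P (-u)) (P v) + dist (P u) (P d) = dist (P v) (P u) + dist (P d) (P (-u))"
      using R by simp
    also have "\<dots> \<longleftrightarrow> dist (P d) (P 0) = 2 * cos v * tan u" by (rule frame_pitot[OF h(2-4) d(1,2)])
    also have "\<dots> \<longleftrightarrow> dist D B' = V" unfolding d(3) hs Td V_def using R by (simp add: mult.assoc)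
    finally show "dist A B + dist C D = dist B C + dist D A \<longleftrightarrow> dist D B' = V" .
  qed
  have c3: "\<exists>D. dist Oc D = R \<and> opp_sides C B' D A \<and> dist D B' = dist F A"
  proof -
    obtain d where d: "0 < d" "d < u" "sin d = cos v * tan u" using frame_exists[OF h(2-4)] by blast
    have sd: "sin d > 0" using d h by (intro sin_gt_zero) auto
    have "dist Oc (T (P d)) = R" using nT norm_P by simp
    moreover have "opp_sides C B' (T (P d)) A" unfolding hs To using frame_D_inv[of d u] d h by simp
    moreover have "dist (T (P d)) B' = V" unfolding hs(4) Td dist_P V_def using d sd by (simp add: algebra_simps)
    then have "dist (T (P d)) B' = dist F A" using FA by simp
    ultimately show ?thesis by blast
  qed
  have c4: "\<forall>D. dist Oc D = R \<and> opp_sides C B' D A \<and> dist D B' = dist F A \<longrightarrow>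
          convex_quad A B C D \<and> tangential_quad A B C D"
  proof (intro allI impI)
    fix D assume hD: "dist Oc D = R \<and> opp_sides C B' D A \<and> dist D B' = dist F A"
    then obtain d where d: "0 < d" "d < u" "D = T (P d)" using Dpar by blast
    have sd: "sin d > 0" using d h by (intro sin_gt_zero) auto
    have "R * (2 * sin d) = R * (2 * cos v * tan u)" using hD FA unfolding d(3) hs Td dist_P V_def
      using sd by (simp add: algebra_simps)
    then have "sin d = cos v * tan u" using R by simp
    then have pit: "sin d * cos u = cos v * sin u" using cu by (simp add: tan_def)
    have td: "tdata (-1) (P (-u)) (P v) (P u) (P d) (Complex (X0 v d) (Y0 v d)) (r0 u v d)"
      by (rule frame_tdata[OF h(2-4) d(1,2) pit])
    have "tdata (sg s * -1) A B C D (T (Complex (X0 v d) (Y0 v d))) (R * r0 u v d)"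
      unfolding hs d(3) by (rule Ttd[OF td])
    moreover have "sg s * -1 = 1 \<or> sg s * -1 = -1" unfolding sg_def by simp
    ultimately show "convex_quad A B C D \<and> tangential_quad A B C D" using tdata_concl by blast
  qed
  show ?thesis using FA val c2 c3 c4 by simp
qed

end
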